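(* Let $\mathcal C$ be a pointed exact Mal'tsev category and let $(C_1,C_0,d,c,e)$ be a reflexive graph in $\mathcal C$. Then the pushout of $d$ and $c$ exists, and $(d,c)\colon C_1\to C_0\times C_0$ is an epimorphism if and only if this pushout $\pi_0(C)$ is a zero object. Moreover, in that case $(d,c)$ is a regular epimorphism.
   Context: A reflexive graph $(C_1,C_0,d,c,e)$ consists of morphisms $d,c\colon C_1\to C_0$ and $e\colon C_0\to C_1$ with $d\circ e=c\circ e=1_{C_0}$. A Mal'tsev category is a finitely complete category in which every reflexive relation is an equivalence relation; exact means Barr-exact. *)

theory Defs
  imports Main
begin

text \<open>An (elementary) category: objects of type 'o, arrows of type 'a.
  Cp C g f is the composite "g after f".\<close>

record ('o, 'a) cat =
  Obj :: "'o set"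
  Arr :: "'a set"
  Dom :: "'a \<Rightarrow> 'o"
  Cod :: "'a \<Rightarrow> 'o"
  Cp  :: "'a \<Rightarrow> 'a \<Rightarrow> 'a"
  Idt :: "'o \<Rightarrow> 'a"

definition hom :: "('o,'a) cat \<Rightarrow> 'o \<Rightarrow> 'o \<Rightarrow> 'a set" where
  "hom C X Y = {f \<in> Arr C. Dom C f = X \<and> Cod C f = Y}"

definition is_category :: "('o,'a) cat \<Rightarrow> bool" where
  "is_category C \<longleftrightarrow>
     (\<forall>f \<in> Arr C. Dom C f \<in> Obj C \<and> Cod C f \<in> Obj C) \<and>
     (\<forall>X \<in> Obj C. Idt C X \<in> hom C X X) \<and>
     (\<forall>f \<in> Arr C. \<forall>g \<in> Arr C. Cod C f = Dom C g \<longrightarrow>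
         Cp C g f \<in> hom C (Dom C f) (Cod C g)) \<and>
     (\<forall>f \<in> Arr C. Cp C f (Idt C (Dom C f)) = f \<and> Cp C (Idt C (Cod C f)) f = f) \<and>
     (\<forall>f \<in> Arr C. \<forall>g \<in> Arr C. \<forall>h \<in> Arr C.
         Cod C f = Dom C g \<longrightarrow> Cod C g = Dom C h \<longrightarrow>
         Cp C h (Cp C g f) = Cp C (Cp C h g) f)"

definition is_terminal :: "('o,'a) cat \<Rightarrow> 'o \<Rightarrow> bool" where
  "is_terminal C T \<longleftrightarrow> T \<in> Obj C \<and> (\<forall>X \<in> Obj C. \<exists>!f. f \<in> hom C X T)"

definition is_initial :: "('o,'a) cat \<Rightarrow> 'o \<Rightarrow> bool" where
  "is_initial C I \<longleftrightarrow> I \<in> Obj C \<and> (\<forall>X \<in> Obj C. \<exists>!f. f \<in> hom C I X)"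

definition zero_object :: "('o,'a) cat \<Rightarrow> 'o \<Rightarrow> bool" where
  "zero_object C Z \<longleftrightarrow> is_initial C Z \<and> is_terminal C Z"

definition pointed :: "('o,'a) cat \<Rightarrow> bool" where
  "pointed C \<longleftrightarrow> (\<exists>Z. zero_object C Z)"

definition monic :: "('o,'a) cat \<Rightarrow> 'a \<Rightarrow> bool" where
  "monic C m \<longleftrightarrow> m \<in> Arr C \<and>
     (\<forall>x \<in> Arr C. \<forall>y \<in> Arr C. Cod C x = Dom C m \<longrightarrow> Cod C y = Dom C m \<longrightarrow>
        Dom C x = Dom C y \<longrightarrow> Cp C m x = Cp C m y \<longrightarrow> x = y)"

definition epi :: "('o,'a) cat \<Rightarrow> 'a \<Rightarrow> bool" where
  "epi C q \<longleftrightarrow> q \<in> Arr C \<and>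
     (\<forall>x \<in> Arr C. \<forall>y \<in> Arr C. Dom C x = Cod C q \<longrightarrow> Dom C y = Cod C q \<longrightarrow>
        Cod C x = Cod C y \<longrightarrow> Cp C x q = Cp C y q \<longrightarrow> x = y)"

definition is_product :: "('o,'a) cat \<Rightarrow> 'o \<Rightarrow> 'o \<Rightarrow> 'o \<Rightarrow> 'a \<Rightarrow> 'a \<Rightarrow> bool" where
  "is_product C A B P p1 p2 \<longleftrightarrow> p1 \<in> hom C P A \<and> p2 \<in> hom C P B \<and>
     (\<forall>X \<in> Obj C. \<forall>f \<in> hom C X A. \<forall>g \<in> hom C X B.
        \<exists>!u. u \<in> hom C X P \<and> Cp C p1 u = f \<and> Cp C p2 u = g)"

definition is_pullback :: "('o,'a) cat \<Rightarrow> 'a \<Rightarrow> 'a \<Rightarrow> 'o \<Rightarrow> 'a \<Rightarrow> 'a \<Rightarrow> bool" where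
  "is_pullback C f g P p1 p2 \<longleftrightarrow> f \<in> Arr C \<and> g \<in> Arr C \<and> Cod C f = Cod C g \<and>
     p1 \<in> hom C P (Dom C f) \<and> p2 \<in> hom C P (Dom C g) \<and> Cp C f p1 = Cp C g p2 \<and>
     (\<forall>X \<in> Obj C. \<forall>x \<in> hom C X (Dom C f). \<forall>y \<in> hom C X (Dom C g).
        Cp C f x = Cp C g y \<longrightarrow>
        (\<exists>!u. u \<in> hom C X P \<and> Cp C p1 u = x \<and> Cp C p2 u = y))"

definition is_pushout :: "('o,'a) cat \<Rightarrow> 'a \<Rightarrow> 'a \<Rightarrow> 'o \<Rightarrow> 'a \<Rightarrow> 'a \<Rightarrow> bool" where
  "is_pushout C f g Q i1 i2 \<longleftrightarrow> f \<in> Arr C \<and> g \<in> Arr C \<and> Dom C f = Dom C g \<and>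
     i1 \<in> hom C (Cod C f) Q \<and> i2 \<in> hom C (Cod C g) Q \<and> Cp C i1 f = Cp C i2 g \<and>
     (\<forall>X \<in> Obj C. \<forall>x \<in> hom C (Cod C f) X. \<forall>y \<in> hom C (Cod C g) X.
        Cp C x f = Cp C y g \<longrightarrow>
        (\<exists>!u. u \<in> hom C Q X \<and> Cp C u i1 = x \<and> Cp C u i2 = y))"

definition is_coequalizer :: "('o,'a) cat \<Rightarrow> 'a \<Rightarrow> 'a \<Rightarrow> 'a \<Rightarrow> bool" where
  "is_coequalizer C f g q \<longleftrightarrow> f \<in> Arr C \<and> g \<in> Arr C \<and>
     Dom C f = Dom C g \<and> Cod C f = Cod C g \<and>
     q \<in> Arr C \<and> Dom C q = Cod C f \<and> Cp C q f = Cp C q g \<and>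
     (\<forall>h \<in> Arr C. Dom C h = Cod C f \<longrightarrow> Cp C h f = Cp C h g \<longrightarrow>
        (\<exists>!u. u \<in> hom C (Cod C q) (Cod C h) \<and> Cp C u q = h))"

definition regular_epi :: "('o,'a) cat \<Rightarrow> 'a \<Rightarrow> bool" where
  "regular_epi C q \<longleftrightarrow> (\<exists>f g. is_coequalizer C f g q)"

definition finitely_complete :: "('o,'a) cat \<Rightarrow> bool" where
  "finitely_complete C \<longleftrightarrow> (\<exists>T. is_terminal C T) \<and>
     (\<forall>f \<in> Arr C. \<forall>g \<in> Arr C. Cod C f = Cod C g \<longrightarrow> (\<exists>P p1 p2. is_pullback C f g P p1 p2))"

definition is_relation :: "('o,'a) cat \<Rightarrow> 'o \<Rightarrow> 'o \<Rightarrow> 'a \<Rightarrow> 'a \<Rightarrow> bool" where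
  "is_relation C X R r1 r2 \<longleftrightarrow> r1 \<in> hom C R X \<and> r2 \<in> hom C R X \<and>
     (\<forall>x \<in> Arr C. \<forall>y \<in> Arr C. Cod C x = R \<longrightarrow> Cod C y = R \<longrightarrow> Dom C x = Dom C y \<longrightarrow>
        Cp C r1 x = Cp C r1 y \<longrightarrow> Cp C r2 x = Cp C r2 y \<longrightarrow> x = y)"

definition reflexive_rel :: "('o,'a) cat \<Rightarrow> 'o \<Rightarrow> 'o \<Rightarrow> 'a \<Rightarrow> 'a \<Rightarrow> bool" where
  "reflexive_rel C X R r1 r2 \<longleftrightarrow> is_relation C X R r1 r2 \<and>
     (\<exists>s \<in> hom C X R. Cp C r1 s = Idt C X \<and> Cp C r2 s = Idt C X)"

definition symmetric_rel :: "('o,'a) cat \<Rightarrow> 'o \<Rightarrow> 'o \<Rightarrow> 'a \<Rightarrow> 'a \<Rightarrow> bool" where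
  "symmetric_rel C X R r1 r2 \<longleftrightarrow> is_relation C X R r1 r2 \<and>
     (\<forall>T \<in> Obj C. \<forall>x \<in> hom C T R. \<exists>z \<in> hom C T R.
        Cp C r1 z = Cp C r2 x \<and> Cp C r2 z = Cp C r1 x)"

definition transitive_rel :: "('o,'a) cat \<Rightarrow> 'o \<Rightarrow> 'o \<Rightarrow> 'a \<Rightarrow> 'a \<Rightarrow> bool" where
  "transitive_rel C X R r1 r2 \<longleftrightarrow> is_relation C X R r1 r2 \<and>
     (\<forall>T \<in> Obj C. \<forall>x \<in> hom C T R. \<forall>y \<in> hom C T R. Cp C r2 x = Cp C r1 y \<longrightarrow>
        (\<exists>z \<in> hom C T R. Cp C r1 z = Cp C r1 x \<and> Cp C r2 z = Cp C r2 y))"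

definition equivalence_rel :: "('o,'a) cat \<Rightarrow> 'o \<Rightarrow> 'o \<Rightarrow> 'a \<Rightarrow> 'a \<Rightarrow> bool" where
  "equivalence_rel C X R r1 r2 \<longleftrightarrow> reflexive_rel C X R r1 r2 \<and>
     symmetric_rel C X R r1 r2 \<and> transitive_rel C X R r1 r2"

definition maltsev :: "('o,'a) cat \<Rightarrow> bool" where
  "maltsev C \<longleftrightarrow> finitely_complete C \<and>
     (\<forall>X R r1 r2. reflexive_rel C X R r1 r2 \<longrightarrow> equivalence_rel C X R r1 r2)"

definition kernel_pair :: "('o,'a) cat \<Rightarrow> 'a \<Rightarrow> 'o \<Rightarrow> 'a \<Rightarrow> 'a \<Rightarrow> bool" where
  "kernel_pair C f R r1 r2 \<longleftrightarrow> is_pullback C f f R r1 r2"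

definition regular_cat :: "('o,'a) cat \<Rightarrow> bool" where
  "regular_cat C \<longleftrightarrow> finitely_complete C \<and>
     (\<forall>f R r1 r2. kernel_pair C f R r1 r2 \<longrightarrow> (\<exists>q. is_coequalizer C r1 r2 q)) \<and>
     (\<forall>f g P p1 p2. regular_epi C f \<longrightarrow> is_pullback C f g P p1 p2 \<longrightarrow> regular_epi C p2)"

definition exact_cat :: "('o,'a) cat \<Rightarrow> bool" where
  "exact_cat C \<longleftrightarrow> regular_cat C \<and>
     (\<forall>X R r1 r2. equivalence_rel C X R r1 r2 \<longrightarrow> (\<exists>f. kernel_pair C f R r1 r2))"

end

theory Submission
  imports Defs
begin

locale category = fixes C :: "('o,'a) cat" assumes cat: "is_category C"
begin

lemma hom_arr: "f \<in> hom C A B \<Longrightarrow> f \<in> Arr C \<and> Dom C f = A \<and> Cod C f = B"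
  by (simp add: hom_def)
lemma homI: "f \<in> Arr C \<Longrightarrow> f \<in> hom C (Dom C f) (Cod C f)"
  by (simp add: hom_def)
lemma homI2: "f \<in> Arr C \<Longrightarrow> Dom C f = A \<Longrightarrow> Cod C f = B \<Longrightarrow> f \<in> hom C A B"
  by (simp add: hom_def)
lemma comp: "f \<in> hom C A B \<Longrightarrow> g \<in> hom C B D \<Longrightarrow> Cp C g f \<in> hom C A D"
  using cat unfolding is_category_def hom_def by auto
lemma idh: "X \<in> Obj C \<Longrightarrow> Idt C X \<in> hom C X X"
  using cat unfolding is_category_def by auto
lemma idl: "f \<in> hom C A B \<Longrightarrow> Cp C (Idt C B) f = f"
  using cat unfolding is_category_def hom_def by auto
lemma idr: "f \<in> hom C A B \<Longrightarrow> Cp C f (Idt C A) = f"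
  using cat unfolding is_category_def hom_def by auto
lemma assoc: "f \<in> hom C A B \<Longrightarrow> g \<in> hom C B D \<Longrightarrow> h \<in> hom C D E \<Longrightarrow>
   Cp C (Cp C h g) f = Cp C h (Cp C g f)"
  using cat unfolding is_category_def hom_def by (metis (mono_tags, lifting) mem_Collect_eq)
lemma obj: "f \<in> hom C A B \<Longrightarrow> A \<in> Obj C \<and> B \<in> Obj C"
  using cat unfolding is_category_def hom_def by auto

lemma regepi_epi: "regular_epi C q \<Longrightarrow> epi C q"
proof -
  assume "regular_epi C q"
  then obtain f g where co: "is_coequalizer C f g q" unfolding regular_epi_def by blast
  show "epi C q" unfolding epi_def
  proof (intro conjI ballI impI)
    show "q \<in> Arr C" using co by (simp add: is_coequalizer_def)
    fix x y assume x: "x \<in> Arr C" and y: "y \<in> Arr C" and dx: "Dom C x = Cod C q"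
      and dy: "Dom C y = Cod C q" and cxy: "Cod C x = Cod C y" and e: "Cp C x q = Cp C y q"
    have cq: "f \<in> Arr C" "g \<in> Arr C" "Dom C f = Dom C g" "Cod C f = Cod C g" "q \<in> Arr C"
       "Dom C q = Cod C f" "Cp C q f = Cp C q g"
      and cu: "\<And>h. h \<in> Arr C \<Longrightarrow> Dom C h = Cod C f \<Longrightarrow> Cp C h f = Cp C h g \<Longrightarrow>
        (\<exists>!u. u \<in> hom C (Cod C q) (Cod C h) \<and> Cp C u q = h)"
      using co unfolding is_coequalizer_def by blast+
    have q: "q \<in> hom C (Cod C f) (Cod C q)" using cq homI2 by simp
    have f: "f \<in> hom C (Dom C f) (Cod C f)" "g \<in> hom C (Dom C f) (Cod C f)"
      using cq homI2 by simp_all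
    have xh: "x \<in> hom C (Cod C q) (Cod C x)" using x dx homI2 by simp
    have yh: "y \<in> hom C (Cod C q) (Cod C x)" using y dy cxy homI2 by simp
    let ?h = "Cp C x q"
    have hh: "?h \<in> hom C (Cod C f) (Cod C x)" using comp[OF q xh] .
    have "Cp C ?h f = Cp C ?h g"
      using assoc[OF f(1) q xh] assoc[OF f(2) q xh] cq by simp
    then have "\<exists>!w. w \<in> hom C (Cod C q) (Cod C ?h) \<and> Cp C w q = ?h"
      using cu hh hom_arr by blast
    moreover have "Cod C ?h = Cod C x" using hh hom_arr by blast
    ultimately show "x = y" using xh yh e by auto
  qed
qed

lemma pbD:
  assumes "is_pullback C f g P p1 p2" "f \<in> hom C A Z" "g \<in> hom C B Z"
  shows "p1 \<in> hom C P A" "p2 \<in> hom C P B" "Cp C f p1 = Cp C g p2"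
    "\<And>X x y. X \<in> Obj C \<Longrightarrow> x \<in> hom C X A \<Longrightarrow> y \<in> hom C X B \<Longrightarrow> Cp C f x = Cp C g y \<Longrightarrow>
        (\<exists>!u. u \<in> hom C X P \<and> Cp C p1 u = x \<and> Cp C p2 u = y)"
  using assms hom_arr unfolding is_pullback_def by metis+

lemma coeqD:
  assumes "is_coequalizer C f g q" "f \<in> hom C A B"
  shows "q \<in> hom C B (Cod C q)" "Cp C q f = Cp C q g" "g \<in> hom C A B"
    "\<And>h. h \<in> hom C B Y \<Longrightarrow> Cp C h f = Cp C h g \<Longrightarrow>
        (\<exists>!u. u \<in> hom C (Cod C q) Y \<and> Cp C u q = h)"
proof -
  have cq: "f \<in> Arr C" "g \<in> Arr C" "Dom C f = Dom C g" "Cod C f = Cod C g" "q \<in> Arr C"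
       "Dom C q = Cod C f" "Cp C q f = Cp C q g"
      and cu: "\<And>h. h \<in> Arr C \<Longrightarrow> Dom C h = Cod C f \<Longrightarrow> Cp C h f = Cp C h g \<Longrightarrow>
        (\<exists>!u. u \<in> hom C (Cod C q) (Cod C h) \<and> Cp C u q = h)"
      using assms(1) unfolding is_coequalizer_def by blast+
  have fh: "Dom C f = A" "Cod C f = B" using assms(2) hom_arr by auto
  show "q \<in> hom C B (Cod C q)" using cq fh homI2 by simp
  show "Cp C q f = Cp C q g" using cq by simp
  show "g \<in> hom C A B" using cq fh homI2 by simp
  fix h assume "h \<in> hom C B Y" "Cp C h f = Cp C h g"
  then show "\<exists>!u. u \<in> hom C (Cod C q) Y \<and> Cp C u q = h"
    using cu[of h] hom_arr fh by auto
qed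

lemma epiD: "epi C q \<Longrightarrow> q \<in> hom C A B \<Longrightarrow> x \<in> hom C B X \<Longrightarrow> y \<in> hom C B X \<Longrightarrow>
   Cp C x q = Cp C y q \<Longrightarrow> x = y"
  unfolding epi_def using hom_arr by metis

lemma image:
  assumes reg: "regular_cat C" and u: "u \<in> hom C A B"
  shows "\<exists>I p m K k1 k2. p \<in> hom C A I \<and> m \<in> hom C I B \<and> Cp C m p = u \<and> monic C m
     \<and> kernel_pair C u K k1 k2 \<and> is_coequalizer C k1 k2 p"
proof -
  have fc: "finitely_complete C" and kc: "\<And>f R r1 r2. kernel_pair C f R r1 r2 \<Longrightarrow> (\<exists>q. is_coequalizer C r1 r2 q)"
    and stab: "\<And>f g P p1 p2. regular_epi C f \<Longrightarrow> is_pullback C f g P p1 p2 \<Longrightarrow> regular_epi C p2"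
    using reg unfolding regular_cat_def by blast+
  have pb: "\<And>f g A' B' Z. f \<in> hom C A' Z \<Longrightarrow> g \<in> hom C B' Z \<Longrightarrow> \<exists>P p1 p2. is_pullback C f g P p1 p2"
    using fc hom_arr unfolding finitely_complete_def by metis
  obtain K k1 k2 where kp: "is_pullback C u u K k1 k2" using pb[OF u u] by blast
  have k: "k1 \<in> hom C K A" "k2 \<in> hom C K A" "Cp C u k1 = Cp C u k2"
    and ku: "\<And>X x y. X \<in> Obj C \<Longrightarrow> x \<in> hom C X A \<Longrightarrow> y \<in> hom C X A \<Longrightarrow> Cp C u x = Cp C u y \<Longrightarrow>
        (\<exists>!w. w \<in> hom C X K \<and> Cp C k1 w = x \<and> Cp C k2 w = y)"
    using pbD[OF kp u u] by blast+
  obtain p where co: "is_coequalizer C k1 k2 p" using kc kp unfolding kernel_pair_def by blast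
  define I where "I = Cod C p"
  have p: "p \<in> hom C A I" "Cp C p k1 = Cp C p k2"
    and pu: "\<And>h Y. h \<in> hom C A Y \<Longrightarrow> Cp C h k1 = Cp C h k2 \<Longrightarrow>
        (\<exists>!w. w \<in> hom C I Y \<and> Cp C w p = h)"
    using coeqD[OF co k(1)] unfolding I_def by blast+
  have rp: "regular_epi C p" using co unfolding regular_epi_def by blast
  have ep: "epi C p" using regepi_epi[OF rp] .
  obtain m where m: "m \<in> hom C I B" "Cp C m p = u" using pu[OF u k(3)] by blast
  have mono: "monic C m" unfolding monic_def
  proof (intro conjI ballI impI)
    show "m \<in> Arr C" using m hom_arr by blast
    fix x y assume x: "x \<in> Arr C" and y: "y \<in> Arr C" and cx: "Cod C x = Dom C m" and cy: "Cod C y = Dom C m"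
      and dxy: "Dom C x = Dom C y" and e: "Cp C m x = Cp C m y"
    define T where "T = Dom C x"
    have xh: "x \<in> hom C T I" using x cx m hom_arr homI2 T_def by metis
    have yh: "y \<in> hom C T I" using y cy m hom_arr homI2 T_def dxy by metis
    obtain P1 a t1 where pb1: "is_pullback C p x P1 a t1" using pb[OF p(1) xh] by blast
    have a: "a \<in> hom C P1 A" "t1 \<in> hom C P1 T" "Cp C p a = Cp C x t1"
      using pbD[OF pb1 p(1) xh] by blast+
    have rt1: "regular_epi C t1" using stab[OF rp pb1] .
    have yt1: "Cp C y t1 \<in> hom C P1 I" using comp[OF a(2) yh] .
    obtain P2 b t2 where pb2: "is_pullback C p (Cp C y t1) P2 b t2" using pb[OF p(1) yt1] by blast
    have b: "b \<in> hom C P2 A" "t2 \<in> hom C P2 P1" "Cp C p b = Cp C (Cp C y t1) t2"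
      using pbD[OF pb2 p(1) yt1] by blast+
    have rt2: "regular_epi C t2" using stab[OF rp pb2] .
    have at2: "Cp C a t2 \<in> hom C P2 A" using comp[OF b(2) a(1)] .
    have "Cp C u (Cp C a t2) = Cp C m (Cp C p (Cp C a t2))"
      using assoc[OF at2 p(1) m(1)] m(2) by simp
    also have "\<dots> = Cp C m (Cp C (Cp C p a) t2)" using assoc[OF b(2) a(1) p(1)] by simp
    also have "\<dots> = Cp C m (Cp C x (Cp C t1 t2))" using a(3) assoc[OF b(2) a(2) xh] by simp
    also have "\<dots> = Cp C (Cp C m x) (Cp C t1 t2)" using assoc[OF comp[OF b(2) a(2)] xh m(1)] by simp
    also have "\<dots> = Cp C (Cp C m y) (Cp C t1 t2)" using e by simp
    also have "\<dots> = Cp C m (Cp C (Cp C y t1) t2)"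
      using assoc[OF comp[OF b(2) a(2)] yh m(1)] assoc[OF b(2) a(2) yh] by simp
    also have "\<dots> = Cp C m (Cp C p b)" using b(3) by simp
    also have "\<dots> = Cp C u b" using assoc[OF b(1) p(1) m(1)] m(2) by simp
    finally have eq: "Cp C u (Cp C a t2) = Cp C u b" .
    have P2o: "P2 \<in> Obj C" using obj[OF b(1)] by blast
    obtain w where w: "w \<in> hom C P2 K" "Cp C k1 w = Cp C a t2" "Cp C k2 w = b"
      using ku[OF P2o at2 b(1) eq] by blast
    have "Cp C p (Cp C a t2) = Cp C p b"
      using assoc[OF w(1) k(1) p(1)] assoc[OF w(1) k(2) p(1)] w p(2) by simp
    then have "Cp C (Cp C x t1) t2 = Cp C (Cp C y t1) t2"
      using b(3) a(3) assoc[OF b(2) a(1) p(1)] by simp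
    then have "Cp C x t1 = Cp C y t1"
      using epiD[OF regepi_epi[OF rt2] b(2) comp[OF a(2) xh] yt1] by simp
    then show "x = y" using epiD[OF regepi_epi[OF rt1] a(2) xh yh] by simp
  qed
  show ?thesis using p(1) m mono kp co unfolding kernel_pair_def by blast
qed

lemma prodD:
  assumes "is_product C A B P p1 p2"
  shows "p1 \<in> hom C P A" "p2 \<in> hom C P B"
    "\<And>X f g. X \<in> Obj C \<Longrightarrow> f \<in> hom C X A \<Longrightarrow> g \<in> hom C X B \<Longrightarrow>
        (\<exists>!u. u \<in> hom C X P \<and> Cp C p1 u = f \<and> Cp C p2 u = g)"
  using assms unfolding is_product_def by blast+

lemma prod_exists:
  assumes fc: "finitely_complete C" and A: "A \<in> Obj C"
  shows "\<exists>P p1 p2. is_product C A A P p1 p2"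
proof -
  obtain T where T: "is_terminal C T" using fc unfolding finitely_complete_def by blast
  have Tu: "\<And>X. X \<in> Obj C \<Longrightarrow> \<exists>!f. f \<in> hom C X T" using T unfolding is_terminal_def by blast
  obtain t where t: "t \<in> hom C A T" using Tu[OF A] by blast
  have "\<exists>P p1 p2. is_pullback C t t P p1 p2"
    using fc t hom_arr unfolding finitely_complete_def by metis
  then obtain P p1 p2 where pb: "is_pullback C t t P p1 p2" by blast
  note D = pbD[OF pb t t]
  have "is_product C A A P p1 p2" unfolding is_product_def
  proof (intro conjI ballI)
    show "p1 \<in> hom C P A" "p2 \<in> hom C P A" using D by blast+
    fix X f g assume X: "X \<in> Obj C" and f: "f \<in> hom C X A" and g: "g \<in> hom C X A"
    have "Cp C t f = Cp C t g" using Tu[OF X] comp[OF f t] comp[OF g t] by blast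
    then show "\<exists>!u. u \<in> hom C X P \<and> Cp C p1 u = f \<and> Cp C p2 u = g" using D(4)[OF X f g] by blast
  qed
  then show ?thesis by blast
qed

end

locale rgraph = category +
  fixes C0 C1 d c e
  assumes d: "d \<in> hom C C1 C0" and c: "c \<in> hom C C1 C0" and e: "e \<in> hom C C0 C1"
    and de: "Cp C d e = Idt C C0" and ce: "Cp C c e = Idt C C0"
begin

lemma poD:
  assumes "is_pushout C d c Q i1 i2"
  shows "i1 \<in> hom C C0 Q" "i2 = i1" "Cp C i1 d = Cp C i1 c"
    "\<And>X x. X \<in> Obj C \<Longrightarrow> x \<in> hom C C0 X \<Longrightarrow> Cp C x d = Cp C x c \<Longrightarrow>
        (\<exists>!w. w \<in> hom C Q X \<and> Cp C w i1 = x)"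
proof -
  have hd: "Cod C d = C0" "Cod C c = C0" using d c hom_arr by auto
  have h: "i1 \<in> hom C C0 Q" "i2 \<in> hom C C0 Q" "Cp C i1 d = Cp C i2 c"
    and U: "\<And>X x y. X \<in> Obj C \<Longrightarrow> x \<in> hom C C0 X \<Longrightarrow> y \<in> hom C C0 X \<Longrightarrow> Cp C x d = Cp C y c \<Longrightarrow>
        (\<exists>!w. w \<in> hom C Q X \<and> Cp C w i1 = x \<and> Cp C w i2 = y)"
    using assms hd unfolding is_pushout_def by (metis)+
  have "i1 = Cp C i1 (Cp C d e)" using de idr[OF h(1)] by simp
  also have "\<dots> = Cp C (Cp C i2 c) e" using assoc[OF e d h(1)] h(3) by simp
  also have "\<dots> = i2" using assoc[OF e c h(2)] ce idr[OF h(2)] by simp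
  finally have eq: "i2 = i1" by simp
  show "i1 \<in> hom C C0 Q" "i2 = i1" "Cp C i1 d = Cp C i1 c" using h eq by auto
  fix X x assume "X \<in> Obj C" "x \<in> hom C C0 X" "Cp C x d = Cp C x c"
  then show "\<exists>!w. w \<in> hom C Q X \<and> Cp C w i1 = x" using U[of X x x] eq by auto
qed

lemma uniq: "\<exists>!x. P x \<Longrightarrow> P a \<Longrightarrow> P b \<Longrightarrow> a = b" by blast

lemma B1:
  assumes pt: "pointed C" and po: "is_pushout C d c Q i1 i2" and pr: "is_product C C0 C0 P p1 p2"
    and u: "u \<in> hom C C1 P" "Cp C p1 u = d" "Cp C p2 u = c" and eu: "epi C u"
  shows "zero_object C Q"
proof -
  note PO = poD[OF po]
  let ?i = i1
  note i = PO(1)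
  note PR = prodD[OF pr]
  obtain Z where Z: "zero_object C Z" using pt unfolding pointed_def by blast
  have Zi: "\<And>X. X \<in> Obj C \<Longrightarrow> \<exists>!f. f \<in> hom C Z X" and Zt: "\<And>X. X \<in> Obj C \<Longrightarrow> \<exists>!f. f \<in> hom C X Z"
    and Zo: "Z \<in> Obj C"
    using Z unfolding zero_object_def is_initial_def is_terminal_def by blast+
  have C0o: "C0 \<in> Obj C" and C1o: "C1 \<in> Obj C" and Qo: "Q \<in> Obj C" using obj[OF d] obj[OF i] by auto
  obtain h where h: "h \<in> hom C C0 Z" using Zt[OF C0o] by blast
  obtain g where g: "g \<in> hom C Z C0" using Zi[OF C0o] by blast
  have z: "Cp C g h \<in> hom C C0 C0" using comp[OF h g] .
  obtain v where v: "v \<in> hom C C0 P" "Cp C p1 v = Idt C C0" "Cp C p2 v = Cp C g h"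
    using PR(3)[OF C0o idh[OF C0o] z] by blast
  have "Cp C (Cp C ?i p1) u = Cp C (Cp C ?i p2) u"
    using assoc[OF u(1) PR(1) i] assoc[OF u(1) PR(2) i] u PO(3) by simp
  then have ip: "Cp C ?i p1 = Cp C ?i p2"
    using epiD[OF eu u(1) comp[OF PR(1) i] comp[OF PR(2) i]] by simp
  have iz: "?i = Cp C (Cp C ?i g) h"
  proof -
    have "?i = Cp C ?i (Cp C p1 v)" using v(2) idr[OF i] by simp
    also have "\<dots> = Cp C (Cp C ?i p2) v" using assoc[OF v(1) PR(1) i] ip by simp
    also have "\<dots> = Cp C ?i (Cp C g h)" using assoc[OF v(1) PR(2) i] v(3) by simp
    also have "\<dots> = Cp C (Cp C ?i g) h" using assoc[OF h g i] by simp
    finally show ?thesis .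
  qed
  have hdc: "Cp C h d = Cp C h c" by (rule uniq[OF Zt[OF C1o] comp[OF d h] comp[OF c h]])
  have init: "is_initial C Q" unfolding is_initial_def
  proof (intro conjI ballI)
    show "Q \<in> Obj C" using Qo .
    fix X assume X: "X \<in> Obj C"
    obtain k where k: "k \<in> hom C Z X" using Zi[OF X] by blast
    have kh: "Cp C k h \<in> hom C C0 X" using comp[OF h k] .
    have "Cp C (Cp C k h) d = Cp C (Cp C k h) c"
      using assoc[OF d h k] assoc[OF c h k] hdc by (simp only:)
    then obtain w where w: "w \<in> hom C Q X" using PO(4)[OF X kh] by blast
    moreover have "a = b" if a: "a \<in> hom C Q X" and b: "b \<in> hom C Q X" for a b
    proof -
      have e1: "Cp C (Cp C a ?i) g = Cp C (Cp C b ?i) g"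
        by (rule uniq[OF Zi[OF X] comp[OF g comp[OF i a]] comp[OF g comp[OF i b]]])
      have "Cp C a ?i = Cp C a (Cp C (Cp C ?i g) h)" by (rule arg_cong[OF iz])
      also have "\<dots> = Cp C (Cp C (Cp C a ?i) g) h"
        using assoc[OF g i a] assoc[OF h comp[OF g i] a] by (simp only:)
      also have "\<dots> = Cp C (Cp C (Cp C b ?i) g) h" using e1 by (simp only:)
      also have "\<dots> = Cp C b (Cp C (Cp C ?i g) h)"
        using assoc[OF g i b] assoc[OF h comp[OF g i] b] by (simp only:)
      also have "\<dots> = Cp C b ?i" by (rule arg_cong[OF iz[symmetric]])
      finally have "Cp C a ?i = Cp C b ?i" .
      moreover have ai: "Cp C a ?i \<in> hom C C0 X" using comp[OF i a] .
      moreover have "Cp C (Cp C a ?i) d = Cp C (Cp C a ?i) c"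
        using assoc[OF d i a] assoc[OF c i a] PO(3) by (simp only:)
      ultimately show "a = b" using uniq[OF PO(4)[OF X ai], of a b] a b by metis
    qed
    ultimately show "\<exists>!f. f \<in> hom C Q X" by (intro ex1I[of _ w]) auto
  qed
  have Qi: "\<And>X. X \<in> Obj C \<Longrightarrow> \<exists>!f. f \<in> hom C Q X" using init unfolding is_initial_def by blast
  obtain s where s: "s \<in> hom C Z Q" using Zi[OF Qo] by blast
  obtain t where t: "t \<in> hom C Q Z" using Zt[OF Qo] by blast
  have st: "Cp C s t = Idt C Q" by (rule uniq[OF Qi[OF Qo] comp[OF t s] idh[OF Qo]])
  have trm: "is_terminal C Q" unfolding is_terminal_def
  proof (intro conjI ballI)
    show "Q \<in> Obj C" using Qo .
    fix X assume X: "X \<in> Obj C"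
    obtain k where k: "k \<in> hom C X Z" using Zt[OF X] by blast
    have "Cp C s k \<in> hom C X Q" using comp[OF k s] .
    moreover have "a = b" if a: "a \<in> hom C X Q" and b: "b \<in> hom C X Q" for a b
    proof -
      have "Cp C t a = Cp C t b" by (rule uniq[OF Zt[OF X] comp[OF a t] comp[OF b t]])
      then have "Cp C (Cp C s t) a = Cp C (Cp C s t) b"
        using assoc[OF a t s] assoc[OF b t s] by simp
      then show ?thesis using st idl[OF a] idl[OF b] by simp
    qed
    ultimately show "\<exists>!f. f \<in> hom C X Q" by (intro ex1I[of _ "Cp C s k"]) auto
  qed
  show ?thesis using init trm unfolding zero_object_def by blast
qed


lemma monicD: "monic C m \<Longrightarrow> m \<in> hom C A B \<Longrightarrow> x \<in> hom C T A \<Longrightarrow> y \<in> hom C T A \<Longrightarrow>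
    Cp C m x = Cp C m y \<Longrightarrow> x = y"
  unfolding monic_def using hom_arr by metis

lemma equiv_kp:
  assumes ex: "exact_cat C" and mal: "maltsev C" and pr: "is_product C C0 C0 P p1 p2"
    and u: "u \<in> hom C C1 P" "Cp C p1 u = d" "Cp C p2 u = c"
  shows "\<exists>I p m K k1 k2 f W. p \<in> hom C C1 I \<and> m \<in> hom C I P \<and> Cp C m p = u \<and> monic C m
     \<and> kernel_pair C u K k1 k2 \<and> is_coequalizer C k1 k2 p \<and> f \<in> hom C C0 W
     \<and> is_pullback C f f I (Cp C p1 m) (Cp C p2 m)"
proof -
  have reg: "regular_cat C" using ex unfolding exact_cat_def by blast
  obtain I p m K k1 k2 where im: "p \<in> hom C C1 I" "m \<in> hom C I P" "Cp C m p = u" "monic C m"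
     "kernel_pair C u K k1 k2" "is_coequalizer C k1 k2 p"
    using image[OF reg u(1)] by blast
  note PR = prodD[OF pr]
  define r1 where "r1 = Cp C p1 m"
  define r2 where "r2 = Cp C p2 m"
  have r: "r1 \<in> hom C I C0" "r2 \<in> hom C I C0" using comp[OF im(2) PR(1)] comp[OF im(2) PR(2)]
    unfolding r1_def r2_def by auto
  have rel: "is_relation C C0 I r1 r2" unfolding is_relation_def
  proof (intro conjI ballI impI)
    show "r1 \<in> hom C I C0" "r2 \<in> hom C I C0" using r by auto
    fix x y assume x: "x \<in> Arr C" and y: "y \<in> Arr C" and cx: "Cod C x = I" and cy: "Cod C y = I"
      and dxy: "Dom C x = Dom C y" and e1: "Cp C r1 x = Cp C r1 y" and e2: "Cp C r2 x = Cp C r2 y"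
    define T where "T = Dom C x"
    have xh: "x \<in> hom C T I" using x cx homI2 T_def by simp
    have yh: "y \<in> hom C T I" using y cy dxy homI2 T_def by simp
    have T0: "T \<in> Obj C" using obj[OF xh] by blast
    have mx: "Cp C m x \<in> hom C T P" "Cp C m y \<in> hom C T P" using comp[OF xh im(2)] comp[OF yh im(2)] by auto
    have "Cp C p1 (Cp C m x) = Cp C r1 x" "Cp C p2 (Cp C m x) = Cp C r2 x"
         "Cp C p1 (Cp C m y) = Cp C r1 x" "Cp C p2 (Cp C m y) = Cp C r2 x"
      using assoc[OF xh im(2) PR(1)] assoc[OF xh im(2) PR(2)]
        assoc[OF yh im(2) PR(1)] assoc[OF yh im(2) PR(2)] e1 e2 unfolding r1_def r2_def by simp_all
    then have "Cp C m x = Cp C m y"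
      using uniq[OF PR(3)[OF T0 comp[OF xh r(1)] comp[OF xh r(2)]], of "Cp C m x" "Cp C m y"] mx
      by blast
    then show "x = y" using monicD[OF im(4) im(2) xh yh] by blast
  qed
  have C0o: "C0 \<in> Obj C" using obj[OF d] by blast
  have s: "Cp C p e \<in> hom C C0 I" using comp[OF e im(1)] .
  have "Cp C r1 (Cp C p e) = Cp C (Cp C p1 (Cp C m p)) e"
    unfolding r1_def using assoc[OF e im(1) comp[OF im(2) PR(1)]] assoc[OF im(1) im(2) PR(1)] by simp
  then have s1: "Cp C r1 (Cp C p e) = Idt C C0" using im(3) u(2) de by simp
  have "Cp C r2 (Cp C p e) = Cp C (Cp C p2 (Cp C m p)) e"
    unfolding r2_def using assoc[OF e im(1) comp[OF im(2) PR(2)]] assoc[OF im(1) im(2) PR(2)] by simp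
  then have s2: "Cp C r2 (Cp C p e) = Idt C C0" using im(3) u(3) ce by simp
  have "reflexive_rel C C0 I r1 r2" unfolding reflexive_rel_def using rel s s1 s2 by blast
  then have "equivalence_rel C C0 I r1 r2" using mal unfolding maltsev_def by blast
  then obtain f where kp: "is_pullback C f f I r1 r2" using ex unfolding exact_cat_def kernel_pair_def by blast
  have "f \<in> Arr C" "r1 \<in> hom C I (Dom C f)" using kp unfolding is_pullback_def by blast+
  then have fh: "f \<in> hom C C0 (Cod C f)" using r(1) hom_arr homI by metis
  show ?thesis using im fh kp unfolding r1_def r2_def by blast
qed


lemma B2:
  assumes ex: "exact_cat C" and mal: "maltsev C" and po: "is_pushout C d c Q i1 i2"
    and pr: "is_product C C0 C0 P p1 p2"
    and u: "u \<in> hom C C1 P" "Cp C p1 u = d" "Cp C p2 u = c" and zq: "zero_object C Q"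
  shows "regular_epi C u"
proof -
  obtain I p m K k1 k2 f W where im: "p \<in> hom C C1 I" "m \<in> hom C I P" "Cp C m p = u" "monic C m"
     "kernel_pair C u K k1 k2" "is_coequalizer C k1 k2 p" and fh: "f \<in> hom C C0 W"
     and kp: "is_pullback C f f I (Cp C p1 m) (Cp C p2 m)"
    using equiv_kp[OF ex mal pr u] by blast
  note PR = prodD[OF pr]
  note PO = poD[OF po]
  note i = PO(1)
  have r: "Cp C p1 m \<in> hom C I C0" "Cp C p2 m \<in> hom C I C0" using comp[OF im(2) PR(1)] comp[OF im(2) PR(2)] by auto
  note KP = pbD[OF kp fh fh]
  have "Cp C f d = Cp C (Cp C f (Cp C p1 m)) p"
    using u(2) im(3) assoc[OF im(1) im(2) PR(1)] assoc[OF im(1) r(1) fh] by simp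
  also have "\<dots> = Cp C (Cp C f (Cp C p2 m)) p" using KP(3) by simp
  also have "\<dots> = Cp C f c"
    using u(3) im(3) assoc[OF im(1) im(2) PR(2)] assoc[OF im(1) r(2) fh] by simp
  finally have fdc: "Cp C f d = Cp C f c" .
  have W0: "W \<in> Obj C" using obj[OF fh] by blast
  obtain w where w: "w \<in> hom C Q W" "Cp C w i1 = f" using PO(4)[OF W0 fh fdc] by blast
  have Qt: "\<And>X. X \<in> Obj C \<Longrightarrow> \<exists>!g. g \<in> hom C X Q"
    using zq unfolding zero_object_def is_terminal_def by blast
  have P0: "P \<in> Obj C" using obj[OF u(1)] by blast
  have "Cp C i1 p1 = Cp C i1 p2" by (rule uniq[OF Qt[OF P0] comp[OF PR(1) i] comp[OF PR(2) i]])
  then have "Cp C f p1 = Cp C f p2" using w(2) assoc[OF PR(1) i w(1)] assoc[OF PR(2) i w(1)] by metis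
  then obtain n where n: "n \<in> hom C P I" "Cp C (Cp C p1 m) n = p1" "Cp C (Cp C p2 m) n = p2"
    using KP(4)[OF P0 PR(1) PR(2)] by blast
  have mn: "Cp C m n = Idt C P"
  proof (rule uniq[OF PR(3)[OF P0 PR(1) PR(2)]])
    show "Cp C m n \<in> hom C P P \<and> Cp C p1 (Cp C m n) = p1 \<and> Cp C p2 (Cp C m n) = p2"
      using comp[OF n(1) im(2)] n(2,3) assoc[OF n(1) im(2) PR(1)] assoc[OF n(1) im(2) PR(2)] by simp
    show "Idt C P \<in> hom C P P \<and> Cp C p1 (Idt C P) = p1 \<and> Cp C p2 (Idt C P) = p2"
      using idh[OF P0] idr[OF PR(1)] idr[OF PR(2)] by simp
  qed
  have I0: "I \<in> Obj C" using obj[OF im(2)] by blast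
  have nm: "Cp C n m = Idt C I"
  proof (rule monicD[OF im(4) im(2) comp[OF im(2) n(1)] idh[OF I0]])
    show "Cp C m (Cp C n m) = Cp C m (Idt C I)"
      using assoc[OF im(2) n(1) im(2)] mn idl[OF im(2)] idr[OF im(2)] by simp
  qed
  have kpu: "is_pullback C u u K k1 k2" using im(5) unfolding kernel_pair_def .
  note KU = pbD[OF kpu u(1) u(1)]
  note CO = coeqD[OF im(6) KU(1)]
  have Cp_: "Cod C p = I" using im(1) hom_arr by blast
  have "is_coequalizer C k1 k2 u" unfolding is_coequalizer_def
  proof (intro conjI ballI impI)
    show "k1 \<in> Arr C" "k2 \<in> Arr C" "Dom C k1 = Dom C k2" "Cod C k1 = Cod C k2" "u \<in> Arr C"
      "Dom C u = Cod C k1" "Cp C u k1 = Cp C u k2"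
      using KU(1,2,3) u(1) hom_arr by auto
    fix h assume h: "h \<in> Arr C" "Dom C h = Cod C k1" "Cp C h k1 = Cp C h k2"
    have hh: "h \<in> hom C C1 (Cod C h)" using h KU(1) hom_arr homI2 by metis
    obtain w' where w': "w' \<in> hom C I (Cod C h)" "Cp C w' p = h"
      and wu: "\<And>v. v \<in> hom C I (Cod C h) \<Longrightarrow> Cp C v p = h \<Longrightarrow> v = w'"
      using CO(4)[OF hh h(3)] Cp_ by metis
    have Cu: "Cod C u = P" using u(1) hom_arr by blast
    show "\<exists>!v. v \<in> hom C (Cod C u) (Cod C h) \<and> Cp C v u = h"
    proof (rule ex1I[of _ "Cp C w' n"])
      have "Cp C (Cp C w' n) u = Cp C w' (Cp C (Cp C n m) p)"
        using im(3) assoc[OF u(1) n(1) w'(1)] assoc[OF im(1) im(2) n(1)] by simp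
      then show "Cp C w' n \<in> hom C (Cod C u) (Cod C h) \<and> Cp C (Cp C w' n) u = h"
        using nm idl[OF im(1)] w'(2) comp[OF n(1) w'(1)] Cu by simp
      fix v assume v: "v \<in> hom C (Cod C u) (Cod C h) \<and> Cp C v u = h"
      then have vh: "v \<in> hom C P (Cod C h)" using Cu by simp
      have "Cp C (Cp C v m) p = h" using v im(3) assoc[OF im(1) im(2) vh] by simp
      then have "Cp C v m = w'" using wu comp[OF im(2) vh] by blast
      then show "v = Cp C w' n" using assoc[OF n(1) im(2) vh] mn idr[OF vh] by simp
    qed
  qed
  then show ?thesis unfolding regular_epi_def by blast
qed

lemma EX:
  assumes ex: "exact_cat C" and mal: "maltsev C"
  shows "\<exists>Q i1 i2. is_pushout C d c Q i1 i2"
proof -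
  have reg: "regular_cat C" using ex unfolding exact_cat_def by blast
  have fc: "finitely_complete C" using reg unfolding regular_cat_def by blast
  have C0o: "C0 \<in> Obj C" and C1o: "C1 \<in> Obj C" using obj[OF d] by auto
  obtain P p1 p2 where pr: "is_product C C0 C0 P p1 p2" using prod_exists[OF fc C0o] by blast
  note PR = prodD[OF pr]
  obtain u where u: "u \<in> hom C C1 P" "Cp C p1 u = d" "Cp C p2 u = c" using PR(3)[OF C1o d c] by blast
  obtain I p m K k1 k2 f W where im: "p \<in> hom C C1 I" "m \<in> hom C I P" "Cp C m p = u" "monic C m"
     "kernel_pair C u K k1 k2" "is_coequalizer C k1 k2 p" and fh: "f \<in> hom C C0 W"
     and kp: "is_pullback C f f I (Cp C p1 m) (Cp C p2 m)"
    using equiv_kp[OF ex mal pr u] by blast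
  have r: "Cp C p1 m \<in> hom C I C0" "Cp C p2 m \<in> hom C I C0" using comp[OF im(2) PR(1)] comp[OF im(2) PR(2)] by auto
  obtain q where co: "is_coequalizer C (Cp C p1 m) (Cp C p2 m) q"
    using reg kp unfolding regular_cat_def kernel_pair_def by blast
  note CO = coeqD[OF co r(1)]
  have ep: "epi C p" using regepi_epi im(6) unfolding regular_epi_def by blast
  define Q where "Q = Cod C q"
  have q: "q \<in> hom C C0 Q" using CO(1) Q_def by simp
  have qd: "Cp C q d = Cp C (Cp C q (Cp C p1 m)) p"
    using u(2) im(3) assoc[OF im(1) im(2) PR(1)] assoc[OF im(1) r(1) q] by simp
  have qc: "Cp C q c = Cp C (Cp C q (Cp C p2 m)) p"
    using u(3) im(3) assoc[OF im(1) im(2) PR(2)] assoc[OF im(1) r(2) q] by simp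
  have "is_pushout C d c Q q q" unfolding is_pushout_def
  proof (intro conjI ballI impI)
    show "d \<in> Arr C" "c \<in> Arr C" "Dom C d = Dom C c" "q \<in> hom C (Cod C d) Q" "q \<in> hom C (Cod C c) Q"
      using d c q hom_arr by auto
    show "Cp C q d = Cp C q c" using qd qc CO(2) by simp
    fix X x y assume X: "X \<in> Obj C" and x: "x \<in> hom C (Cod C d) X" and y: "y \<in> hom C (Cod C c) X"
      and xy: "Cp C x d = Cp C y c"
    have x': "x \<in> hom C C0 X" and y': "y \<in> hom C C0 X" using x y d c hom_arr by auto
    have "x = Cp C x (Cp C d e)" using de idr[OF x'] by simp
    also have "\<dots> = Cp C (Cp C y c) e" using assoc[OF e d x'] xy by simp
    also have "\<dots> = y" using assoc[OF e c y'] ce idr[OF y'] by simp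
    finally have yx: "y = x" by simp
    have "Cp C (Cp C x (Cp C p1 m)) p = Cp C (Cp C x (Cp C p2 m)) p"
      using assoc[OF im(1) r(1) x'] assoc[OF im(1) r(2) x'] u(2,3) im(3)
        assoc[OF im(1) im(2) PR(1)] assoc[OF im(1) im(2) PR(2)] xy yx by simp
    then have "Cp C x (Cp C p1 m) = Cp C x (Cp C p2 m)"
      using epiD[OF ep im(1) comp[OF r(1) x'] comp[OF r(2) x']] by blast
    then have "\<exists>!w. w \<in> hom C Q X \<and> Cp C w q = x" using CO(4)[OF x'] Q_def by simp
    then show "\<exists>!w. w \<in> hom C Q X \<and> Cp C w q = x \<and> Cp C w q = y" using yx by simp
  qed
  then show ?thesis by blast
qed

end
theorem mainTheorem7:
  fixes C :: "('o, 'a) cat"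
    and C0 C1 :: 'o and d c e :: 'a
  assumes "is_category C"
    and "pointed C" and "exact_cat C" and "maltsev C"
    and "C0 \<in> Obj C" and "C1 \<in> Obj C"
    and "d \<in> hom C C1 C0" and "c \<in> hom C C1 C0" and "e \<in> hom C C0 C1"
    and "Cp C d e = Idt C C0" and "Cp C c e = Idt C C0"
  shows "(\<exists>Q i1 i2. is_pushout C d c Q i1 i2) \<and>
         (\<forall>Q i1 i2 P p1 p2 u.
            is_pushout C d c Q i1 i2 \<longrightarrow> is_product C C0 C0 P p1 p2 \<longrightarrow>
            u \<in> hom C C1 P \<longrightarrow> Cp C p1 u = d \<longrightarrow> Cp C p2 u = c \<longrightarrow>
            ((epi C u \<longleftrightarrow> zero_object C Q) \<and> (epi C u \<longrightarrow> regular_epi C u)))"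
proof -
  interpret rgraph C C0 C1 d c e
    using assms by (simp add: rgraph_def category_def rgraph_axioms_def)
  show ?thesis
  proof (intro conjI allI impI)
    show "\<exists>Q i1 i2. is_pushout C d c Q i1 i2" using EX assms(3,4) by blast
    fix Q i1 i2 P p1 p2 u
    assume po: "is_pushout C d c Q i1 i2" and pr: "is_product C C0 C0 P p1 p2"
      and u: "u \<in> hom C C1 P" and u1: "Cp C p1 u = d" and u2: "Cp C p2 u = c"
    have ez: "epi C u \<Longrightarrow> zero_object C Q" using B1[OF assms(2) po pr u u1 u2] .
    have zr: "zero_object C Q \<Longrightarrow> regular_epi C u" using B2[OF assms(3,4) po pr u u1 u2] .
    show "epi C u = zero_object C Q" using ez zr regepi_epi by blast
    show "epi C u \<Longrightarrow> regular_epi C u" using ez zr by blast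
  qed
qed

end
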